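(* Let $G$ be a graph on $2n$ vertices and let $\mathbf{x}$ be a perfect fractional matching of $G$. Let $b>1$ and $M:=\{e\in E(G):\mathbf{x}_e\geq\frac bn\}$. Suppose $h(\mathbf{x})\geq n\log\frac n2$. Then $\sum_{e\in M}\mathbf{x}_e\leq\frac{4n}{\log b}$.
   Context: $\log=\log_2$. A perfect fractional matching of a graph $G$ is $\mathbf{x}\colon E(G)\to\mathbb{R}_{\geq0}$ with $\sum_{w\in N(v)}\mathbf{x}_{vw}=1$ for every vertex $v$. Its entropy is $h(\mathbf{x})=\sum_{e\in E(G)}\mathbf{x}_e\log\frac1{\mathbf{x}_e}$ (with $0\log\frac10:=0$). *)

theory Defs
  imports "HOL-Analysis.Analysis"
begin

definition simple_graph :: "'a set \<Rightarrow> 'a set set \<Rightarrow> bool" where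
  "simple_graph V E \<longleftrightarrow> finite V \<and> (\<forall>e\<in>E. e \<subseteq> V \<and> card e = 2)"

definition perfect_fractional_matching :: "'a set \<Rightarrow> 'a set set \<Rightarrow> ('a set \<Rightarrow> real) \<Rightarrow> bool" where
  "perfect_fractional_matching V E x \<longleftrightarrow>
     (\<forall>e\<in>E. x e \<ge> 0) \<and> (\<forall>v\<in>V. (\<Sum>e\<in>{e\<in>E. v \<in> e}. x e) = 1)"

definition entropy :: "'a set set \<Rightarrow> ('a set \<Rightarrow> real) \<Rightarrow> real" where
  "entropy E x = (\<Sum>e\<in>E. if x e = 0 then 0 else x e * log 2 (1 / x e))"

end

theory Submission
  imports Defs
begin

lemma ln2_ge_half: "ln (2::real) \<ge> 1/2"
proof -
  have "ln (1/2::real) \<le> 1/2 - 1" by (rule ln_le_minus_one) simp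
  then show ?thesis by (simp add: ln_div)
qed

lemma pt_bound:
  fixes t N :: real
  assumes "t > 0" "N > 0"
  shows "t * log 2 (1/t) \<le> t * (1 + log 2 N) + 1 / (2 * N * ln 2)"
proof -
  have l2: "ln (2::real) > 0" by simp
  have "ln (1/(2*N*t)) \<le> 1/(2*N*t) - 1" by (rule ln_le_minus_one) (use assms in simp)
  hence a: "t * ln (1/(2*N*t)) \<le> t * (1/(2*N*t) - 1)" using assms by (simp add: mult_left_mono)
  have b: "t * (1/(2*N*t) - 1) \<le> 1/(2*N)" using assms by (simp add: field_simps)
  have "ln (1/t) = ln 2 + ln N + ln (1/(2*N*t))" using assms
    by (simp add: ln_div ln_mult)
  hence "t * ln (1/t) \<le> t * (ln 2 + ln N) + 1/(2*N)" using a b by (simp add: algebra_simps)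
  hence "t * ln (1/t) / ln 2 \<le> (t * (ln 2 + ln N) + 1/(2*N)) / ln 2"
    using l2 by (simp add: divide_right_mono)
  moreover have "(t * (ln 2 + ln N) + 1/(2*N)) / ln 2 = t * (1 + log 2 N) + 1 / (2 * N * ln 2)"
    using l2 by (simp add: log_def field_simps)
  moreover have "t * log 2 (1/t) = t * ln (1/t) / ln 2" by (simp add: log_def)
  ultimately show ?thesis by simp
qed

theorem lemma4p3:
  fixes V :: "'a set" and E :: "'a set set" and x :: "'a set \<Rightarrow> real"
    and n :: nat and b :: real
  assumes "simple_graph V E"
    and "card V = 2 * n"
    and "perfect_fractional_matching V E x"
    and "b > 1"
    and "entropy E x \<ge> real n * log 2 (real n / 2)"
  shows "(\<Sum>e\<in>{e\<in>E. x e \<ge> b / real n}. x e) \<le> 4 * real n / log 2 b"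
proof -
  have finV: "finite V" and Esub: "\<And>e. e \<in> E \<Longrightarrow> e \<subseteq> V \<and> card e = 2"
    using assms(1) by (auto simp: simple_graph_def)
  have Esub2: "E \<subseteq> {B. B \<subseteq> V \<and> card B = 2}" using Esub by auto
  have finE: "finite E" by (rule finite_subset[OF Esub2]) (simp add: finV)
  have cardE: "card E \<le> card V choose 2"
    using card_mono[OF _ Esub2] finV n_subsets[OF finV, of 2] by (simp add: finite_Collect_subsets)
  have xnn: "\<And>e. e \<in> E \<Longrightarrow> x e \<ge> 0" and xs: "\<And>v. v \<in> V \<Longrightarrow> (\<Sum>e\<in>{e\<in>E. v \<in> e}. x e) = 1"
    using assms(3) by (auto simp: perfect_fractional_matching_def)
  define M where "M = {e\<in>E. x e \<ge> b / real n}"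
  define W where "W = sum x M"
  have lb: "log 2 b > 0" using assms(4) by simp
  show ?thesis
  proof (cases "n = 0")
    case True
    then have "V = {}" using assms(2) finV by simp
    then have "E = {}" using Esub by fastforce
    then show ?thesis using True by simp
  next
    case False
    hence npos: "real n > 0" by simp
    have total: "sum x E = real n"
    proof -
      have "(\<Sum>v\<in>V. \<Sum>e\<in>{e\<in>E. v \<in> e}. x e) = (\<Sum>e\<in>E. \<Sum>v\<in>{v\<in>V. v \<in> e}. x e)"
        by (rule sum.swap_restrict[OF finV finE])
      also have "\<dots> = (\<Sum>e\<in>E. 2 * x e)"
      proof (rule sum.cong)
        fix e assume "e \<in> E"
        then have "{v\<in>V. v \<in> e} = e" using Esub by auto
        then show "(\<Sum>v\<in>{v\<in>V. v \<in> e}. x e) = 2 * x e" using Esub \<open>e \<in> E\<close> by simp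
      qed simp
      finally have "real (card V) = 2 * sum x E" using xs by (simp add: sum_distrib_left)
      then show ?thesis using assms(2) by simp
    qed
    define c where "c = 1 / (2 * real n * ln 2)"
    have c0: "c \<ge> 0" unfolding c_def using npos by simp
    have pt: "(if x e = 0 then 0 else x e * log 2 (1 / x e))
         \<le> x e * (1 + log 2 (real n)) + c - (if x e \<ge> b / real n then x e * (1 + log 2 b) else 0)"
      if "e \<in> E" for e
    proof (cases "x e = 0")
      case True
      have "b / real n > 0" using npos assms(4) by simp
      hence "\<not> x e \<ge> b / real n" using True by simp
      then show ?thesis using True c0 by simp
    next
      case False
      hence xp: "x e > 0" using xnn[OF that] by simp
      show ?thesis
      proof (cases "x e \<ge> b / real n")
        case True
        have bn: "b / real n > 0" using npos assms(4) by simp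
        have "log 2 (1 / x e) \<le> log 2 (real n / b)"
          using True bn xp assms(4) npos by (simp add: field_simps)
        also have "\<dots> = log 2 (real n) - log 2 b" using npos assms(4) by (simp add: log_divide)
        finally have "x e * log 2 (1 / x e) \<le> x e * (log 2 (real n) - log 2 b)"
          using xp by (simp add: mult_left_mono)
        then show ?thesis using True False c0 by (simp add: algebra_simps)
      next
        case F2: False
        show ?thesis using pt_bound[OF xp npos] False F2 unfolding c_def by simp
      qed
    qed
    have "entropy E x \<le> (\<Sum>e\<in>E. x e * (1 + log 2 (real n)) + c - (if x e \<ge> b / real n then x e * (1 + log 2 b) else 0))"
      unfolding entropy_def by (rule sum_mono) (rule pt)
    also have "\<dots> = real n * (1 + log 2 (real n)) + real (card E) * c - (1 + log 2 b) * W"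
    proof -
      have "(\<Sum>e\<in>E. if x e \<ge> b / real n then x e * (1 + log 2 b) else 0) = (1 + log 2 b) * W"
        unfolding W_def M_def sum.inter_filter[OF finE] sum_distrib_left
        by (rule sum.cong) auto
      then show ?thesis
        by (simp add: sum.distrib sum_subtractf sum_distrib_right[symmetric] total)
    qed
    finally have h1: "entropy E x \<le> real n * (1 + log 2 (real n)) + real (card E) * c - (1 + log 2 b) * W" .
    have "real n * log 2 (real n / 2) = real n * log 2 (real n) - real n"
      using npos by (simp add: log_divide algebra_simps)
    with h1 assms(5) have h2: "(1 + log 2 b) * W \<le> 2 * real n + real (card E) * c"
      by (simp add: algebra_simps)
    have "real (card E) \<le> real (2*n choose 2)" using cardE assms(2) by simp
    also have "real (2*n choose 2) = real n * (2 * real n - 1)"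
      by (simp add: choose_two of_nat_diff) (cases n; simp add: algebra_simps)
    finally have cE: "real (card E) \<le> real n * (2 * real n - 1)" .
    have "real (card E) * c \<le> real n * (2 * real n) * c"
      using cE c0 by (intro mult_right_mono) (auto simp: npos algebra_simps)
    also have "\<dots> = real n / ln 2" unfolding c_def using npos by (simp add: field_simps)
    also have "\<dots> \<le> 2 * real n"
      using ln2_ge_half npos by (simp add: field_simps)
    finally have h3: "(1 + log 2 b) * W \<le> 4 * real n" using h2 by simp
    have W0: "W \<ge> 0" unfolding W_def M_def by (rule sum_nonneg) (simp add: xnn)
    have "log 2 b * W \<le> 4 * real n" using h3 W0 by (simp add: algebra_simps)
    then have "W \<le> 4 * real n / log 2 b" using lb by (simp add: field_simps)
    then show ?thesis unfolding W_def M_def .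
  qed
qed

end
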